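(* For every $M\in\Lambda^{\mathrm{rb}}$, at most one reduction sequence starts from $M$. Here a reduction sequence from $M$ means a maximal sequence $M\equiv M_0\to M_1\to M_2\to\cdots$, which is either infinite or ends in a term having no $\to$-reduct.
   Context: **$\lambda$-terms and contexts.** $\Lambda$ is the set of untyped $\lambda$-terms (up to $\alpha$-equivalence). A context $C[\,]$ is a $\lambda$-term with exactly one hole $[\,]$. $C[M]$ is the result of filling the hole with $M$; binders of $C$ may capture free variables of $M$. We write $M\,\vec N$ for $M\,N_1\cdots N_n$ (left-associated), where $n\ge 0$. **Atoms and $\Lambda^\bullet$.** For each $M\in\Lambda$ there is a new formal symbol $\underline{M}$, called an atom. Atoms are constants: they have no free variables, and substitution leaves them unchanged. For $M\in\Lambda$, $M^\bullet$ replaces each free occurrence of each variable $x$ in $M$ by the atom $\underline{x}$. Set $\Lambda^\bullet=\{M^\bullet: M\in\Lambda\}$, with substitution extended to these terms by treating atoms as constants. **The set $\Lambda^{\mathrm{rb}}$.** It is the least set such that: 1. $\underline{M}\in\Lambda^{\mathrm{rb}}$ for all $M\in\Lambda$; 2. $\langle C[\,],M\rangle\in\Lambda^{\mathrm{rb}}$ for every context $C[\,]$ and every $M\in\Lambda^\bullet$; 3. $\langle C[\,],M\,\vec N\rangle\in\Lambda^{\mathrm{rb}}$ for every context $C[\,]$, every $M\in\Lambda^{\mathrm{rb}}$ and all $N_1,\dots,N_n\in\Lambda^\bullet$. **The relation $\to$ on $\Lambda^{\mathrm{rb}}$.** It is the least relation satisfying: - (R1) $\langle C[\,],\underline{M}\rangle\to\underline{C[M]}$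 for $M\in\Lambda$; - (R2) $\langle C[\,],\lambda x.M\rangle\to\langle C[\lambda x.[\,]],M[x:=\underline{x}]\rangle$ for $\lambda x.M\in\Lambda^\bullet$; - (R3) $\langle C[\,],\underline{M}\,N_0\,\vec N\rangle\to\langle C[\,],\langle M\,[\,],N_0\rangle\,\vec N\rangle$ for $M\in\Lambda$ and $N_0,\vec N\in\Lambda^\bullet$; - (R4) $\langle C[\,],(\lambda x.M)\,N_0\,\vec N\rangle\to\langle C[\,],M[x:=N_0]\,\vec N\rangle$ for $\lambda x.M,N_0,\vec N\in\Lambda^\bullet$; - (R5) if $M\to M'$ with $M,M'\in\Lambda^{\mathrm{rb}}$, then $\langle C[\,],M\,\vec N\rangle\to\langle C[\,],M'\,\vec N\rangle$ for every context $C[\,]$ and $\vec N\in\Lambda^\bullet$. *)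

theory Defs
  imports Main "HOL-Library.Extended_Nat"
begin

datatype 'v lterm = LVar 'v | LLam 'v "'v lterm" | LApp "'v lterm" "'v lterm"

(* One-hole contexts; binders are named and capture free variables of what is plugged in. *)
datatype 'v ctx = Hole | CLam 'v "'v ctx" | CAppL "'v ctx" "'v lterm" | CAppR "'v lterm" "'v ctx"

fun plug :: "'v ctx \<Rightarrow> 'v lterm \<Rightarrow> 'v lterm" where
  "plug Hole M = M"
| "plug (CLam x C) M = LLam x (plug C M)"
| "plug (CAppL C N) M = LApp (plug C M) N"
| "plug (CAppR N C) M = LApp N (plug C M)"

fun cplug :: "'v ctx \<Rightarrow> 'v ctx \<Rightarrow> 'v ctx" where
  "cplug Hole D = D"
| "cplug (CLam x C) D = CLam x (cplug C D)"
| "cplug (CAppL C N) D = CAppL (cplug C D) N"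
| "cplug (CAppR N C) D = CAppR N (cplug C D)"

(* Terms over atoms: lambda-terms extended with atoms \<underline>M (Atom M) and
   pairs <C[ ], M> (Pair C M).  Lambda^bullet and Lambda^rb are subsets of this type. *)
datatype 'v tm = TVar 'v | TLam 'v "'v tm" | TApp "'v tm" "'v tm"
  | Atom "'v lterm" | Pair "'v ctx" "'v tm"

definition apps :: "'v tm \<Rightarrow> 'v tm list \<Rightarrow> 'v tm" where
  "apps M Ns = foldl TApp M Ns"

fun bullet_aux :: "'v set \<Rightarrow> 'v lterm \<Rightarrow> 'v tm" where
  "bullet_aux B (LVar x) = (if x \<in> B then TVar x else Atom (LVar x))"
| "bullet_aux B (LLam x M) = TLam x (bullet_aux (insert x B) M)"
| "bullet_aux B (LApp M N) = TApp (bullet_aux B M) (bullet_aux B N)"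

definition bullet :: "'v lterm \<Rightarrow> 'v tm" where
  "bullet M = bullet_aux {} M"

(* Lambda^bullet = { M^bullet | M in Lambda }, closed under renaming of bound variables:
   pair-free terms without free variables whose atoms are all of the form \<underline>x. *)
fun is_bul :: "'v set \<Rightarrow> 'v tm \<Rightarrow> bool" where
  "is_bul B (TVar x) = (x \<in> B)"
| "is_bul B (TLam x M) = is_bul (insert x B) M"
| "is_bul B (TApp M N) = (is_bul B M \<and> is_bul B N)"
| "is_bul B (Atom a) = (\<exists>v. a = LVar v)"
| "is_bul B (Pair C M) = False"

definition Bul :: "'v tm set" where
  "Bul = {M. is_bul {} M}"

(* substitution M[x:=N]; atoms are constants.  Only used with closed N (N in Lambda^bullet),
   so no capture can occur. *)
fun subst :: "'v tm \<Rightarrow> 'v \<Rightarrow> 'v tm \<Rightarrow> 'v tm" where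
  "subst (TVar y) x N = (if y = x then N else TVar y)"
| "subst (TLam y M) x N = (if y = x then TLam y M else TLam y (subst M x N))"
| "subst (TApp M1 M2) x N = TApp (subst M1 x N) (subst M2 x N)"
| "subst (Atom a) x N = Atom a"
| "subst (Pair C M) x N = Pair C M"

inductive_set RB :: "'v tm set" where
  rb_atom: "Atom M \<in> RB"
| rb_bul: "M \<in> Bul \<Longrightarrow> Pair C M \<in> RB"
| rb_app: "M \<in> RB \<Longrightarrow> set Ns \<subseteq> Bul \<Longrightarrow> Pair C (apps M Ns) \<in> RB"

inductive step :: "'v tm \<Rightarrow> 'v tm \<Rightarrow> bool" where
  R1: "step (Pair C (Atom M)) (Atom (plug C M))"
| R2: "TLam x M \<in> Bul \<Longrightarrow>
       step (Pair C (TLam x M)) (Pair (cplug C (CLam x Hole)) (subst M x (Atom (LVar x))))"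
| R3: "N0 \<in> Bul \<Longrightarrow> set Ns \<subseteq> Bul \<Longrightarrow>
       step (Pair C (apps (Atom M) (N0 # Ns)))
            (Pair C (apps (Pair (CAppR M Hole) N0) Ns))"
| R4: "TLam x M \<in> Bul \<Longrightarrow> N0 \<in> Bul \<Longrightarrow> set Ns \<subseteq> Bul \<Longrightarrow>
       step (Pair C (apps (TLam x M) (N0 # Ns))) (Pair C (apps (subst M x N0) Ns))"
| R5: "step M M' \<Longrightarrow> M \<in> RB \<Longrightarrow> M' \<in> RB \<Longrightarrow> set Ns \<subseteq> Bul \<Longrightarrow>
       step (Pair C (apps M Ns)) (Pair C (apps M' Ns))"

(* A reduction sequence from M: M = f 0 \<rightarrow> f 1 \<rightarrow> ... with len steps (len = \<infinity> for an
   infinite sequence); if finite, the last term f len has no reduct. *)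
definition red_seq :: "'v tm \<Rightarrow> (nat \<Rightarrow> 'v tm) \<Rightarrow> enat \<Rightarrow> bool" where
  "red_seq M f len \<longleftrightarrow>
     f 0 = M \<and>
     (\<forall>i. enat i < len \<longrightarrow> step (f i) (f (Suc i))) \<and>
     (\<forall>n. len = enat n \<longrightarrow> \<not> (\<exists>N. step (f n) N))"

end

theory Submission
  imports Defs
begin

fun notapp :: "'v tm \<Rightarrow> bool" where
  "notapp (TApp a b) = False"
| "notapp _ = True"

lemma apps_snoc: "apps h (xs @ [x]) = TApp (apps h xs) x"
  by (simp add: apps_def)

lemma apps_nil: "apps h [] = h"
  by (simp add: apps_def)

lemma apps_notapp: "notapp (apps h xs) \<Longrightarrow> xs = []"
  by (cases xs rule: rev_exhaust) (auto simp: apps_snoc)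

lemma apps_cons_neq[simp]:
  "Atom a \<noteq> apps h (x#xs)" "apps h (x#xs) \<noteq> Atom a"
  "TLam v t \<noteq> apps h (x#xs)" "apps h (x#xs) \<noteq> TLam v t"
  "Pair c t \<noteq> apps h (x#xs)" "apps h (x#xs) \<noteq> Pair c t"
  using apps_notapp[of h "x#xs"] by (metis list.distinct(1) notapp.simps)+

lemma apps_inj:
  "apps h1 a1 = apps h2 a2 \<Longrightarrow> notapp h1 \<Longrightarrow> notapp h2 \<Longrightarrow> h1 = h2 \<and> a1 = a2"
proof (induction a1 arbitrary: a2 rule: rev_induct)
  case Nil
  then have "notapp (apps h2 a2)" by (simp add: apps_nil)
  then have "a2 = []" by (rule apps_notapp)
  then show ?case using Nil by (simp add: apps_nil)
next
  case (snoc x xs)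
  show ?case
  proof (cases a2 rule: rev_exhaust)
    case Nil
    then show ?thesis using snoc.prems by (auto simp: apps_snoc apps_nil)
  next
    case (snoc ys y)
    then show ?thesis using snoc.prems snoc.IH[of ys] by (auto simp: apps_snoc)
  qed
qed

lemma apps_inj0:
  "h1 = apps h2 a2 \<Longrightarrow> notapp h1 \<Longrightarrow> notapp h2 \<Longrightarrow> h1 = h2 \<and> a2 = []"
  using apps_inj[of h1 "[]" h2 a2] by (simp add: apps_nil)

lemma step_pair: "step M N \<Longrightarrow> \<exists>C X. M = Pair C X"
  by (induction rule: step.induct) auto

lemma step_det: "step M N1 \<Longrightarrow> step M N2 \<Longrightarrow> N1 = N2"
proof (induction M N1 arbitrary: N2 rule: step.induct)
  case (R1 C M)
  from R1 show ?case
  proof cases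
    case (R5 M0 M' Ns)
    show ?thesis
    proof -
      obtain Ca X where e: "M0 = Pair Ca X" using R5 step_pair[of M0 M'] by blast
      have a: "Atom M = apps M0 Ns" using R5 by simp
      have "Atom M = M0 \<and> Ns = []" by (rule apps_inj0[OF a]) (simp_all add: e)
      then show ?thesis using e by auto
    qed
  qed auto
next
  case (R2 x M C)
  from R2(2) show ?case
  proof cases
    case (R5 M0 M' Ns)
    show ?thesis
    proof -
      obtain Ca X where e: "M0 = Pair Ca X" using R5 step_pair[of M0 M'] by blast
      have a: "TLam x M = apps M0 Ns" using R5 by simp
      have "TLam x M = M0 \<and> Ns = []" by (rule apps_inj0[OF a]) (simp_all add: e)
      then show ?thesis using e by auto
    qed
  qed auto
next
  case (R3 N0 Ns C M)
  from R3(3) show ?case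
  proof cases
    case (R3 N0' Ns' M')
    then show ?thesis using apps_inj[of "Atom M" "N0 # Ns" "Atom M'" "N0' # Ns'"] by auto
  next
    case (R4 x M' N0' Ns')
    then show ?thesis using apps_inj[of "Atom M" "N0 # Ns" "TLam x M'" "N0' # Ns'"] by auto
  next
    case (R5 M0 M' Ns')
    then show ?thesis using apps_inj[of "Atom M" "N0 # Ns" M0 Ns'] step_pair[of M0 M'] by auto
  qed auto
next
  case (R4 x M N0 Ns C)
  from R4(4) show ?case
  proof cases
    case (R3 N0' Ns' M')
    then show ?thesis using apps_inj[of "TLam x M" "N0 # Ns" "Atom M'" "N0' # Ns'"] by auto
  next
    case (R4 x' M' N0' Ns')
    then show ?thesis using apps_inj[of "TLam x M" "N0 # Ns" "TLam x' M'" "N0' # Ns'"] by auto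
  next
    case (R5 M0 M' Ns')
    then show ?thesis using apps_inj[of "TLam x M" "N0 # Ns" M0 Ns'] step_pair[of M0 M'] by auto
  qed auto
next
  case (R5 M M' Ns C)
  obtain C0 X0 where M: "M = Pair C0 X0" using step_pair[OF R5(1)] by blast
  from R5(6) show ?case
  proof cases
    case (R1 M1)
    then show ?thesis using apps_inj0[of "Atom M1" M Ns] M by auto
  next
    case (R2 x M1)
    then show ?thesis using apps_inj0[of "TLam x M1" M Ns] M by auto
  next
    case (R3 N0' Ns' M1)
    then show ?thesis using apps_inj[of M Ns "Atom M1" "N0' # Ns'"] M by auto
  next
    case (R4 x M1 N0' Ns')
    then show ?thesis using apps_inj[of M Ns "TLam x M1" "N0' # Ns'"] M by auto
  next
    case (R5 M1 M1' Ns')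
    then show ?thesis using apps_inj[of M Ns M1 Ns'] M step_pair[of M1 M1'] R5.IH by fastforce
  qed
qed

theorem proposition5:
  fixes M :: "'v tm"
  assumes "M \<in> RB"
    and "red_seq M f lf"
    and "red_seq M g lg"
  shows "lf = lg \<and> (\<forall>i. enat i \<le> lf \<longrightarrow> f i = g i)"
proof -
  have f0: "f 0 = M" and fs: "\<And>i. enat i < lf \<Longrightarrow> step (f i) (f (Suc i))"
    and fe: "\<And>n N. lf = enat n \<Longrightarrow> \<not> step (f n) N"
    using assms(2) unfolding red_seq_def by auto
  have g0: "g 0 = M" and gs: "\<And>i. enat i < lg \<Longrightarrow> step (g i) (g (Suc i))"
    and ge: "\<And>n N. lg = enat n \<Longrightarrow> \<not> step (g n) N"
    using assms(3) unfolding red_seq_def by auto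
  have eq: "enat i \<le> lf \<Longrightarrow> enat i \<le> lg \<Longrightarrow> f i = g i" for i
  proof (induction i)
    case 0 then show ?case using f0 g0 by simp
  next
    case (Suc i)
    have a: "enat i < lf" "enat i < lg" using Suc.prems
      by (metis Suc_ile_eq)+
    then have "f i = g i" using Suc.IH by simp
    then show ?case using fs[OF a(1)] gs[OF a(2)] step_det by metis
  qed
  have "lf = lg"
  proof (rule ccontr)
    assume ne: "lf \<noteq> lg"
    show False
    proof (cases "lf < lg")
      case True
      then obtain n where n: "lf = enat n" by (cases lf) auto
      then have "f n = g n" using eq True by (simp add: order_less_imp_le)
      then show False using fe[OF n] gs[of n] True n by metis
    next
      case False
      then have "lg < lf" using ne by auto
      then obtain n where n: "lg = enat n" by (cases lg) auto
      then have "f n = g n" using eq \<open>lg < lf\<close> by (simp add: order_less_imp_le)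
      then show False using ge[OF n] fs[of n] \<open>lg < lf\<close> n by metis
    qed
  qed
  then show ?thesis using eq by simp
qed

end
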